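(* Let $\mathcal{H}_\mathrm{S}\cong\mathbb{C}^d$ be a finite-dimensional quantum system and let $\mathcal{E}_1,\mathcal{E}_2$ be completely positive trace-preserving (CPT) maps on the operators on $\mathcal{H}_\mathrm{S}$. Let $\chi_1=\chi[\mathcal{E}_1]$ and $\chi_2=\chi[\mathcal{E}_2]$ be their Choi states, and let $E$ be an entanglement measure and $E^\sharp$ the corresponding entanglement of assistance (as defined in the context). If $$E^\sharp[\chi_1] < E[\chi_2],$$ then the dynamics $\mathcal{D}=(\mathcal{E}_1,\mathcal{E}_2)$ requires truly quantum memory; that is, there exist no Kraus decomposition $\{M_i\}$ of $\mathcal{E}_1$ (i.e. $\mathcal{E}_1[\rho]=\sum_i M_i\rho M_i^\dagger$ for all $\rho$) and CPT maps $\Phi_i$ on the operators on $\mathcal{H}_\mathrm{S}$ such that $\mathcal{E}_2[\rho]=\sum_i \Phi_i[M_i\rho M_i^\dagger]$ for all $\rho$.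
   Context: Choi state: let $\mathcal{H}_\mathrm{A}\cong\mathbb{C}^d$ be an ancilla, $\{\ket{j_\mathrm{S}}\}$, $\{\ket{j_\mathrm{A}}\}$ orthonormal bases, and $\ket{\phi^+}=\frac{1}{\sqrt d}\sum_{j=0}^{d-1}\ket{j_\mathrm{S}}\ket{j_\mathrm{A}}$. For a CPT map $\mathcal{E}$ on $\mathrm{S}$, its Choi state is $\chi[\mathcal{E}]=(\mathcal{E}\otimes\mathbb{1})(\ket{\phi^+}\bra{\phi^+})$, a state on $\mathcal{H}_\mathrm{S}\otimes\mathcal{H}_\mathrm{A}$. Entanglement measure: $E$ is an entanglement monotone on bipartite states of $\mathrm{S}\mathrm{A}$ (e.g. entanglement of formation or concurrence) whose value on a mixed state is the convex roof of its pure-state values, $E[\rho]=\min_{\{p_k,\ket{\varphi_k}\}}\sum_k p_kE[\ket{\varphi_k}]$ over all pure-state decompositions $\rho=\sum_k p_k\ket{\varphi_k}\bra{\varphi_k}$, and which does not increase under local CPT maps acting on $\mathrm{S}$. Entanglement of assistance: $E^\sharp[\chi]=\max_{\{p_k,\ket{\psi_k}\}}\sum_k p_kE[\ket{\psi_k}]$, the maximum over all pure-state decompositions $\chi=\sum_kp_k\ket{\psi_k}\bra{\psi_k}$. A dynamics $(\mathcal{E}_1,\mathcal{E}_2)$ is said to be realizable with classical memory iff there exist a Kraus decomposition $\{M_i\}$ of $\mathcal{E}_1$ and CPT maps $\Phi_i$ with $\mathcal{E}_2[\rho]=\sum_i\Phi_i[M_i\rho M_i^\dagger]$; otherwise it requires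 truly quantum memory. *)

theory Defs
  imports Complex_Main "HOL-Library.Extended_Real"
begin

text \<open>Operators on a finite-dimensional Hilbert space with orthonormal basis indexed
  by a finite type 'a are represented by their matrices 'a => 'a => complex.
  The system S has basis type 'n (so d = CARD('n)); the ancilla A also has basis
  type 'n; the joint system SA has basis type 'n * 'n.\<close>

type_synonym 'a op = "'a \<Rightarrow> 'a \<Rightarrow> complex"

definition mmul :: "'a::finite op \<Rightarrow> 'a op \<Rightarrow> 'a op" where
  "mmul A B = (\<lambda>i j. \<Sum>k\<in>UNIV. A i k * B k j)"

definition adj :: "'a op \<Rightarrow> 'a op" where
  "adj A = (\<lambda>i j. cnj (A j i))"

definition mtrace :: "'a::finite op \<Rightarrow> complex" where
  "mtrace A = (\<Sum>i\<in>UNIV. A i i)"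

definition psd_on :: "'a set \<Rightarrow> 'a op \<Rightarrow> bool" where
  "psd_on I A \<longleftrightarrow> (\<forall>v :: 'a \<Rightarrow> complex.
     Im (\<Sum>i\<in>I. \<Sum>j\<in>I. cnj (v i) * A i j * v j) = 0 \<and>
     Re (\<Sum>i\<in>I. \<Sum>j\<in>I. cnj (v i) * A i j * v j) \<ge> 0)"

definition psd :: "'a::finite op \<Rightarrow> bool" where
  "psd A \<longleftrightarrow> psd_on UNIV A"

definition density :: "'a::finite op \<Rightarrow> bool" where
  "density \<rho> \<longleftrightarrow> psd \<rho> \<and> mtrace \<rho> = 1"

text \<open>Local action (Lambda \<otimes> id) of a map on the first tensor factor of a bipartite operator.\<close>
definition loc :: "('a op \<Rightarrow> 'a op) \<Rightarrow> ('a \<times> 'b) op \<Rightarrow> ('a \<times> 'b) op" where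
  "loc \<Lambda> X = (\<lambda>(i, a) (j, b). \<Lambda> (\<lambda>i' j'. X (i', a) (j', b)) i j)"

definition clinear_map :: "('a op \<Rightarrow> 'b op) \<Rightarrow> bool" where
  "clinear_map \<Lambda> \<longleftrightarrow> (\<forall>c X Y. \<Lambda> (\<lambda>i j. c * X i j + Y i j) = (\<lambda>i j. c * \<Lambda> X i j + \<Lambda> Y i j))"

definition trace_preserving :: "('a::finite op \<Rightarrow> 'a op) \<Rightarrow> bool" where
  "trace_preserving \<Lambda> \<longleftrightarrow> (\<forall>X. mtrace (\<Lambda> X) = mtrace X)"

text \<open>Complete positivity: Lambda \<otimes> id_k is positive for every finite ancilla dimension k
  (ancilla basis {..<k} inside nat).\<close>
definition completely_positive :: "('a::finite op \<Rightarrow> 'a op) \<Rightarrow> bool" where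
  "completely_positive \<Lambda> \<longleftrightarrow> (\<forall>(k::nat) (X :: ('a \<times> nat) op).
     psd_on (UNIV \<times> {..<k}) X \<longrightarrow> psd_on (UNIV \<times> {..<k}) (loc \<Lambda> X))"

definition CPT :: "('a::finite op \<Rightarrow> 'a op) \<Rightarrow> bool" where
  "CPT \<Lambda> \<longleftrightarrow> clinear_map \<Lambda> \<and> completely_positive \<Lambda> \<and> trace_preserving \<Lambda>"

definition phi_plus :: "('a::finite \<times> 'a) \<Rightarrow> complex" where
  "phi_plus = (\<lambda>(j, a). if j = a then complex_of_real (1 / sqrt (real (card (UNIV :: 'a set)))) else 0)"

definition proj :: "('a \<Rightarrow> complex) \<Rightarrow> 'a op" where
  "proj \<psi> = (\<lambda>x y. \<psi> x * cnj (\<psi> y))"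

definition choi :: "('a::finite op \<Rightarrow> 'a op) \<Rightarrow> ('a \<times> 'a) op" where
  "choi \<E> = loc \<E> (proj phi_plus)"

definition unit_vec :: "('a::finite \<Rightarrow> complex) \<Rightarrow> bool" where
  "unit_vec \<psi> \<longleftrightarrow> (\<Sum>x\<in>UNIV. cmod (\<psi> x) ^ 2) = 1"

definition pure_decomp :: "'a::finite op \<Rightarrow> (real \<times> ('a \<Rightarrow> complex)) list \<Rightarrow> bool" where
  "pure_decomp \<rho> D \<longleftrightarrow>
     (\<forall>(p, \<psi>) \<in> set D. p \<ge> 0 \<and> unit_vec \<psi>) \<and>
     sum_list (map fst D) = 1 \<and>
     \<rho> = (\<lambda>x y. sum_list (map (\<lambda>(p, \<psi>). complex_of_real p * proj \<psi> x y) D))"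

definition avg_ent :: "('a op \<Rightarrow> real) \<Rightarrow> (real \<times> ('a \<Rightarrow> complex)) list \<Rightarrow> real" where
  "avg_ent E D = sum_list (map (\<lambda>(p, \<psi>). p * E (proj \<psi>)) D)"

text \<open>Entanglement measure on SA: convex roof of its pure-state values (a minimum),
  non-increasing under local CPT maps on S.\<close>
definition ent_measure :: "(('n::finite \<times> 'n) op \<Rightarrow> real) \<Rightarrow> bool" where
  "ent_measure E \<longleftrightarrow>
     (\<forall>\<rho>. density \<rho> \<longrightarrow>
        (\<exists>D. pure_decomp \<rho> D \<and> E \<rho> = avg_ent E D) \<and>
        (\<forall>D. pure_decomp \<rho> D \<longrightarrow> E \<rho> \<le> avg_ent E D)) \<and>
     (\<forall>\<rho> (\<Lambda> :: 'n op \<Rightarrow> 'n op). density \<rho> \<and> CPT \<Lambda> \<longrightarrow> E (loc \<Lambda> \<rho>) \<le> E \<rho>)"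

definition ent_assist :: "(('a::finite) op \<Rightarrow> real) \<Rightarrow> 'a op \<Rightarrow> ereal" where
  "ent_assist E \<chi> = (SUP D \<in> {D. pure_decomp \<chi> D}. ereal (avg_ent E D))"

definition sandwich :: "'a::finite op \<Rightarrow> 'a op \<Rightarrow> 'a op" where
  "sandwich M \<rho> = mmul (mmul M \<rho>) (adj M)"

definition kraus_decomp :: "('a::finite op \<Rightarrow> 'a op) \<Rightarrow> 'a op list \<Rightarrow> bool" where
  "kraus_decomp \<E> Ms \<longleftrightarrow>
     (\<forall>\<rho>. \<E> \<rho> = (\<lambda>x y. \<Sum>i<length Ms. sandwich (Ms ! i) \<rho> x y))"

definition classical_memory :: "('a::finite op \<Rightarrow> 'a op) \<Rightarrow> ('a op \<Rightarrow> 'a op) \<Rightarrow> bool" where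
  "classical_memory \<E>1 \<E>2 \<longleftrightarrow>
     (\<exists>Ms (\<Phi>s :: ('a op \<Rightarrow> 'a op) list).
        kraus_decomp \<E>1 Ms \<and> length \<Phi>s = length Ms \<and> (\<forall>\<Phi>\<in>set \<Phi>s. CPT \<Phi>) \<and>
        (\<forall>\<rho>. \<E>2 \<rho> = (\<lambda>x y. \<Sum>i<length Ms. (\<Phi>s ! i) (sandwich (Ms ! i) \<rho>) x y)))"

end

theory Submission
  imports Defs
begin


lemma psd_on_proj: "psd_on I (proj \<psi>)"
proof -
  have key: "(\<Sum>i\<in>I. \<Sum>j\<in>I. cnj (v i) * proj \<psi> i j * v j) = complex_of_real ((cmod (\<Sum>i\<in>I. cnj (v i) * \<psi> i))^2)" for v
  proof -
    have "(\<Sum>i\<in>I. \<Sum>j\<in>I. cnj (v i) * proj \<psi> i j * v j) = (\<Sum>i\<in>I. cnj (v i) * \<psi> i) * cnj (\<Sum>i\<in>I. cnj (v i) * \<psi> i)"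
    proof -
      have "cnj (\<Sum>i\<in>I. cnj (v i) * \<psi> i) = (\<Sum>i\<in>I. v i * cnj (\<psi> i))" by (simp add: cnj_sum)
      thus ?thesis by (simp add: proj_def sum_product mult_ac)
    qed
    also have "\<dots> = complex_of_real ((cmod (\<Sum>i\<in>I. cnj (v i) * \<psi> i))^2)"
      by (simp only: complex_norm_square)
    finally show ?thesis .
  qed
  show ?thesis unfolding psd_on_def key by simp
qed

lemma sum_list_concat_map:
  "sum_list (map g (concat (map F L))) = sum_list (map (\<lambda>i. sum_list (map g (F i))) L)"
  by (induct L) auto

lemma double_sum_reindex:
  assumes "inj_on h A"
  shows "(\<Sum>u\<in>h`A. \<Sum>u'\<in>h`A. F u u') = (\<Sum>u\<in>A. \<Sum>u'\<in>A. F (h u) (h u'))"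
  using assms by (simp add: sum.reindex)

lemma clinear_zero: "clinear_map \<Phi> \<Longrightarrow> \<Phi> (\<lambda>i j. 0) = (\<lambda>i j. 0)"
proof -
  assume a: "clinear_map \<Phi>"
  from a have "\<Phi> (\<lambda>i j. 1 * (0::complex) + 0) = (\<lambda>i j. 1 * \<Phi> (\<lambda>i j. 0) i j + \<Phi> (\<lambda>i j. 0) i j)"
    unfolding clinear_map_def by (erule_tac x=1 in allE, erule_tac x="\<lambda>i j. 0" in allE, erule_tac x="\<lambda>i j. 0" in allE) simp
  hence "\<Phi> (\<lambda>i j. 0) = (\<lambda>i j. \<Phi> (\<lambda>i j. 0) i j + \<Phi> (\<lambda>i j. 0) i j)" by simp
  hence "\<And>i j. \<Phi> (\<lambda>i j. 0) i j = \<Phi> (\<lambda>i j. 0) i j + \<Phi> (\<lambda>i j. 0) i j" by metis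
  thus ?thesis by fastforce
qed

lemma clinear_scale: "clinear_map \<Phi> \<Longrightarrow> \<Phi> (\<lambda>i j. c * X i j) = (\<lambda>i j. c * \<Phi> X i j)"
proof -
  assume a: "clinear_map \<Phi>"
  have "\<Phi> (\<lambda>i j. c * X i j + (\<lambda>i j. 0) i j) = (\<lambda>i j. c * \<Phi> X i j + \<Phi> (\<lambda>i j. 0) i j)"
    using a[unfolded clinear_map_def, rule_format, of c X "\<lambda>i j. 0"] .
  thus ?thesis using clinear_zero[OF a] by simp
qed

lemma loc_zero: "clinear_map \<Phi> \<Longrightarrow> loc \<Phi> (\<lambda>u v. 0) = (\<lambda>u v. 0)"
  by (auto simp: loc_def clinear_zero fun_eq_iff)

lemma loc_scale: "clinear_map \<Phi> \<Longrightarrow> loc \<Phi> (\<lambda>u v. c * X u v) = (\<lambda>u v. c * loc \<Phi> X u v)"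
  by (auto simp: loc_def clinear_scale[where X="\<lambda>i' j'. X (i', _) (j', _)"] fun_eq_iff)

lemma loc_comp: "loc \<Phi> (loc S X) = loc (\<lambda>\<rho>. \<Phi> (S \<rho>)) X"
  by (auto simp: loc_def fun_eq_iff)

lemma loc_sum: "loc (\<lambda>\<rho> x y. \<Sum>i\<in>A. F i \<rho> x y) X = (\<lambda>u v. \<Sum>i\<in>A. loc (F i) X u v)"
  by (auto simp: loc_def fun_eq_iff)

lemma loc_sandwich_proj:
  "loc (sandwich M) (proj \<phi>) = proj (\<lambda>(i, a). \<Sum>k\<in>UNIV. M i k * \<phi> (k, a))"
  apply (auto simp: loc_def fun_eq_iff sandwich_def mmul_def adj_def proj_def)
  apply (simp add: sum_distrib_left sum_distrib_right sum_product mult_ac)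
  done



lemma loc_psd:
  fixes \<Phi> :: "'n::finite op \<Rightarrow> 'n op" and X :: "('n \<times> 'm::finite) op"
  assumes cp: "completely_positive \<Phi>" and X: "psd X"
  shows "psd (loc \<Phi> X)"
proof -
  obtain f :: "'m \<Rightarrow> nat" and k where fk: "f ` UNIV = {i. i < k}" and inj: "inj f"
    using finite_imp_inj_to_nat_seg[of "UNIV :: 'm set"] by auto
  define g where "g = inv f"
  have gf: "g (f a) = a" for a using inj by (simp add: g_def)
  define h :: "'n \<times> 'm \<Rightarrow> 'n \<times> nat" where "h = (\<lambda>(i, a). (i, f a))"
  have hinj: "inj h" using inj by (auto simp: h_def inj_def)
  have himg: "h ` UNIV = UNIV \<times> {..<k}"
  proof -
    have "h ` UNIV = UNIV \<times> f ` UNIV" by (force simp: h_def)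
    thus ?thesis using fk by (auto simp: lessThan_def)
  qed
  define X' :: "('n \<times> nat) op" where "X' = (\<lambda>(i, m) (j, m'). X (i, g m) (j, g m'))"
  have X'h: "X' (h u) (h u') = X u u'" for u u'
    by (cases u; cases u') (simp add: X'_def h_def gf)
  have "psd_on (UNIV \<times> {..<k}) X'"
    unfolding psd_on_def
  proof
    fix w :: "'n \<times> nat \<Rightarrow> complex"
    have eq: "(\<Sum>i\<in>UNIV \<times> {..<k}. \<Sum>j\<in>UNIV \<times> {..<k}. cnj (w i) * X' i j * w j)
        = (\<Sum>i\<in>UNIV. \<Sum>j\<in>UNIV. cnj ((w \<circ> h) i) * X i j * (w \<circ> h) j)"
      unfolding himg[symmetric] by (subst double_sum_reindex[OF hinj]) (simp only: X'h comp_apply)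
    show "Im (\<Sum>i\<in>UNIV \<times> {..<k}. \<Sum>j\<in>UNIV \<times> {..<k}. cnj (w i) * X' i j * w j) = 0 \<and>
        0 \<le> Re (\<Sum>i\<in>UNIV \<times> {..<k}. \<Sum>j\<in>UNIV \<times> {..<k}. cnj (w i) * X' i j * w j)"
      unfolding eq by (rule X[unfolded psd_def psd_on_def, rule_format])
  qed
  hence L: "psd_on (UNIV \<times> {..<k}) (loc \<Phi> X')" using cp unfolding completely_positive_def by blast
  have LX'h: "loc \<Phi> X' (h u) (h u') = loc \<Phi> X u u'" for u u'
    by (cases u; cases u') (simp add: X'_def h_def gf loc_def)
  show ?thesis unfolding psd_def psd_on_def
  proof
    fix v :: "'n \<times> 'm \<Rightarrow> complex"
    define w where "w = v \<circ> inv h"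
    have wh: "w (h u) = v u" for u using hinj by (simp add: w_def)
    have eq: "(\<Sum>i\<in>UNIV \<times> {..<k}. \<Sum>j\<in>UNIV \<times> {..<k}. cnj (w i) * loc \<Phi> X' i j * w j)
        = (\<Sum>i\<in>UNIV. \<Sum>j\<in>UNIV. cnj (v i) * loc \<Phi> X i j * v j)"
      unfolding himg[symmetric] by (subst double_sum_reindex[OF hinj]) (simp only: LX'h wh)
    show "Im (\<Sum>i\<in>UNIV. \<Sum>j\<in>UNIV. cnj (v i) * loc \<Phi> X i j * v j) = 0 \<and>
        0 \<le> Re (\<Sum>i\<in>UNIV. \<Sum>j\<in>UNIV. cnj (v i) * loc \<Phi> X i j * v j)"
      unfolding eq[symmetric] by (rule L[unfolded psd_on_def, rule_format])
  qed
qed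

lemma mtrace_pair:
  "mtrace (Y :: ('n::finite \<times> 'm::finite) op) = (\<Sum>a\<in>UNIV. mtrace (\<lambda>i j. Y (i, a) (j, a)))"
proof -
  have "mtrace Y = (\<Sum>(i,a)\<in>UNIV\<times>UNIV. Y (i,a) (i,a))" unfolding mtrace_def
    by (simp add: case_prod_beta)
  also have "\<dots> = (\<Sum>i\<in>UNIV. \<Sum>a\<in>UNIV. Y (i,a) (i,a))" by (rule sum.cartesian_product[symmetric])
  also have "\<dots> = (\<Sum>a\<in>UNIV. \<Sum>i\<in>UNIV. Y (i,a) (i,a))" by (rule sum.swap)
  finally show ?thesis by (simp add: mtrace_def)
qed

lemma loc_trace:
  fixes \<Phi> :: "'n::finite op \<Rightarrow> 'n op" and X :: "('n \<times> 'm::finite) op"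
  assumes "trace_preserving \<Phi>"
  shows "mtrace (loc \<Phi> X) = mtrace X"
  using assms unfolding mtrace_pair[of "loc \<Phi> X"] mtrace_pair[of X] trace_preserving_def
  by (simp add: loc_def)

lemma loc_density:
  fixes \<Phi> :: "'n::finite op \<Rightarrow> 'n op" and X :: "('n \<times> 'm::finite) op"
  assumes "CPT \<Phi>" "density X"
  shows "density (loc \<Phi> X)"
proof -
  have "completely_positive \<Phi>" "trace_preserving \<Phi>" using assms(1) unfolding CPT_def by auto
  moreover have "psd X" "mtrace X = 1" using assms(2) unfolding density_def by auto
  ultimately show ?thesis unfolding density_def using loc_psd[of \<Phi> X] loc_trace[of \<Phi> X] by simp
qed

lemma mtrace_proj: "mtrace (proj \<psi>) = complex_of_real (\<Sum>x\<in>UNIV. cmod (\<psi> x) ^ 2)"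
  unfolding mtrace_def proj_def by (simp only: of_real_sum complex_norm_square)

lemma density_proj: "unit_vec \<psi> \<Longrightarrow> density (proj \<psi>)"
  unfolding density_def psd_def using psd_on_proj mtrace_proj unfolding unit_vec_def by (metis of_real_1)


lemma H1: "sum_list (map fst (map (\<lambda>(q, \<phi>). ((c::real) * q, \<phi>)) xs)) = c * sum_list (map fst xs)"
  by (induct xs) (auto simp: algebra_simps)

lemma H2: "sum_list (map (\<lambda>(p, \<psi>). complex_of_real p * proj \<psi> x y) (map (\<lambda>(q, \<phi>). (c * q, \<phi>)) xs))
   = complex_of_real c * sum_list (map (\<lambda>(p, \<psi>). complex_of_real p * proj \<psi> x y) xs)"
  by (induct xs) (auto simp: algebra_simps)

lemma H3: "avg_ent E (map (\<lambda>(q, \<phi>). (c * q, \<phi>)) xs) = c * avg_ent E xs"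
  unfolding avg_ent_def by (induct xs) (auto simp: algebra_simps)

lemma unit_phi_plus: "unit_vec (phi_plus :: ('n::finite \<times> 'n) \<Rightarrow> complex)"
proof -
  let ?d = "real (card (UNIV :: 'n set))"
  have dpos: "?d > 0" by (simp add: card_gt_0_iff)
  have "(\<Sum>u\<in>UNIV. cmod (phi_plus (u :: 'n \<times> 'n)) ^ 2) = (\<Sum>(j, a)\<in>UNIV \<times> (UNIV :: 'n set). cmod (phi_plus (j, a)) ^ 2)"
    by (simp add: case_prod_beta)
  also have "\<dots> = (\<Sum>j\<in>UNIV. \<Sum>a\<in>(UNIV :: 'n set). cmod (phi_plus (j, a)) ^ 2)"
    by (rule sum.cartesian_product[symmetric])
  also have "\<dots> = (\<Sum>j\<in>(UNIV :: 'n set). 1 / ?d)"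
  proof (rule sum.cong[OF refl])
    fix j :: 'n
    have "(\<Sum>a\<in>(UNIV :: 'n set). cmod (phi_plus (j, a)) ^ 2) = (\<Sum>a\<in>(UNIV :: 'n set). if a = j then 1 / ?d else 0)"
      by (rule sum.cong) (auto simp: phi_plus_def power_divide norm_divide)
    also have "\<dots> = 1 / ?d" by simp
    finally show "(\<Sum>a\<in>(UNIV :: 'n set). cmod (phi_plus (j, a)) ^ 2) = 1 / ?d" .
  qed
  also have "\<dots> = 1" using dpos by simp
  finally show ?thesis unfolding unit_vec_def .
qed



theorem theorem1:
  fixes \<E>1 \<E>2 :: "'n::finite op \<Rightarrow> 'n op"
    and E :: "('n \<times> 'n) op \<Rightarrow> real"
  assumes "CPT \<E>1" and "CPT \<E>2"
    and "ent_measure E"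
    and "ent_assist E (choi \<E>1) < ereal (E (choi \<E>2))"
  shows "\<not> classical_memory \<E>1 \<E>2"
proof
  assume "classical_memory \<E>1 \<E>2"
  then obtain Ms and \<Phi>s :: "('n op \<Rightarrow> 'n op) list" where
    kr: "kraus_decomp \<E>1 Ms" and len: "length \<Phi>s = length Ms" and cpt: "\<forall>\<Phi>\<in>set \<Phi>s. CPT \<Phi>"
    and e2: "\<forall>\<rho>. \<E>2 \<rho> = (\<lambda>x y. \<Sum>i<length Ms. (\<Phi>s ! i) (sandwich (Ms ! i) \<rho>) x y)"
    unfolding classical_memory_def by blast
  define n where "n = length Ms"
  have cptI: "i < n \<Longrightarrow> CPT (\<Phi>s ! i)" for i using cpt len by (simp add: n_def)
  hence linI: "i < n \<Longrightarrow> clinear_map (\<Phi>s ! i)" for i by (simp add: CPT_def)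
  define \<psi> where "\<psi> i = (\<lambda>(x, a). \<Sum>k\<in>UNIV. (Ms ! i) x k * phi_plus (k, a))" for i
  define p where "p i = (\<Sum>u\<in>UNIV. cmod (\<psi> i u) ^ 2)" for i
  define I where "I = {i. i < n \<and> p i > 0}"
  define L where "L = filter (\<lambda>i. p i > 0) [0..<n]"
  have setL: "set L = I" and distL: "distinct L" by (auto simp: L_def I_def)
  have finI: "finite I" by (simp add: I_def)
  have pnn: "p i \<ge> 0" for i by (simp add: p_def sum_nonneg)
  define \<psi>h where "\<psi>h i = (\<lambda>u. \<psi> i u / complex_of_real (sqrt (p i)))" for i
  have proj_scale: "proj (\<psi> i) = (\<lambda>x y. complex_of_real (p i) * proj (\<psi>h i) x y)" if "p i > 0" for i
  proof -
    have "sqrt (p i) * sqrt (p i) = p i" using that by simp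
    hence sq: "complex_of_real (sqrt (p i)) * complex_of_real (sqrt (p i)) = complex_of_real (p i)"
      by (simp only: of_real_mult[symmetric])
    moreover have "complex_of_real (sqrt (p i)) \<noteq> 0" using that by simp
    ultimately show ?thesis
      by (auto simp: proj_def \<psi>h_def fun_eq_iff)
  qed
  have unit_h: "unit_vec (\<psi>h i)" if "p i > 0" for i
  proof -
    have "(\<Sum>u\<in>UNIV. cmod (\<psi>h i u) ^ 2) = (\<Sum>u\<in>UNIV. cmod (\<psi> i u) ^ 2 / p i)"
      using that by (simp add: \<psi>h_def norm_divide power_divide)
    also have "\<dots> = p i / p i" by (simp only: p_def sum_divide_distrib)
    finally show ?thesis using that unfolding unit_vec_def by simp
  qed
  have psi_zero: "\<psi> i = (\<lambda>u. 0)" if "\<not> p i > 0" for i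
  proof -
    have "p i = 0" using that pnn[of i] by simp
    hence "\<forall>u\<in>UNIV. cmod (\<psi> i u) ^ 2 = 0" unfolding p_def
      by (subst (asm) sum_nonneg_eq_0_iff) auto
    thus ?thesis by auto
  qed
  have proj0: "proj (\<lambda>u. 0) = (\<lambda>x y. 0)" by (simp add: proj_def)
  have E1eq: "\<E>1 = (\<lambda>\<rho> x y. \<Sum>i\<in>{..<n}. sandwich (Ms ! i) \<rho> x y)"
    using kr unfolding kraus_decomp_def n_def by auto
  have chi1: "choi \<E>1 = (\<lambda>u v. \<Sum>i\<in>{..<n}. proj (\<psi> i) u v)"
    unfolding choi_def E1eq loc_sum loc_sandwich_proj \<psi>_def ..
  have chi1I: "choi \<E>1 = (\<lambda>u v. \<Sum>i\<in>I. complex_of_real (p i) * proj (\<psi>h i) u v)"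
  proof (intro ext)
    fix u v
    have "(\<Sum>i\<in>{..<n}. proj (\<psi> i) u v) = (\<Sum>i\<in>I. complex_of_real (p i) * proj (\<psi>h i) u v)"
      by (rule sum.mono_neutral_cong_right) (auto simp: I_def proj_scale psi_zero proj0)
    thus "choi \<E>1 u v = (\<Sum>i\<in>I. complex_of_real (p i) * proj (\<psi>h i) u v)" by (simp add: chi1)
  qed
  have trp: "mtrace (proj (phi_plus :: 'n \<times> 'n \<Rightarrow> complex)) = 1"
    using density_proj[OF unit_phi_plus[where 'n='n]] by (simp add: density_def)
  have tr1: "mtrace (choi \<E>1) = 1"
    unfolding choi_def using loc_trace[of \<E>1 "proj phi_plus"] assms(1) trp
    by (simp add: CPT_def)
  have tr_h: "mtrace (proj (\<psi>h i)) = 1" if "i \<in> I" for i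
  proof -
    have "0 < p i" using that by (simp add: I_def)
    hence "density (proj (\<psi>h i))" by (rule density_proj[OF unit_h])
    thus ?thesis by (simp add: density_def)
  qed
  have "mtrace (choi \<E>1) = complex_of_real (\<Sum>i\<in>I. p i)"
  proof -
    have "mtrace (choi \<E>1) = (\<Sum>u\<in>UNIV. \<Sum>i\<in>I. complex_of_real (p i) * proj (\<psi>h i) u u)"
      by (simp add: mtrace_def chi1I)
    also have "\<dots> = (\<Sum>i\<in>I. complex_of_real (p i) * mtrace (proj (\<psi>h i)))"
      by (subst sum.swap) (simp add: mtrace_def sum_distrib_left)
    also have "\<dots> = (\<Sum>i\<in>I. complex_of_real (p i))"
      by (rule sum.cong[OF refl]) (simp add: tr_h)
    finally show ?thesis by simp
  qed
  hence sumP: "(\<Sum>i\<in>I. p i) = 1" using tr1 by (metis of_real_eq_1_iff)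
  define D1 where "D1 = map (\<lambda>i. (p i, \<psi>h i)) L"
  have pd1: "pure_decomp (choi \<E>1) D1"
    unfolding pure_decomp_def
  proof (intro conjI)
    show "\<forall>(q, \<phi>)\<in>set D1. 0 \<le> q \<and> unit_vec \<phi>"
    proof -
      have "\<forall>i\<in>set L. 0 \<le> p i \<and> unit_vec (\<psi>h i)"
      proof
        fix i assume "i \<in> set L"
        hence "0 < p i" using setL by (simp add: I_def)
        thus "0 \<le> p i \<and> unit_vec (\<psi>h i)" using unit_h[of i] by simp
      qed
      thus ?thesis by (simp add: D1_def)
    qed
    show "sum_list (map fst D1) = 1"
      using sumP by (simp add: D1_def o_def sum_list_distinct_conv_sum_set[OF distL] setL)
    show "choi \<E>1 = (\<lambda>x y. \<Sum>(p, \<psi>)\<leftarrow>D1. complex_of_real p * proj \<psi> x y)"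
      unfolding chi1I by (simp add: D1_def o_def sum_list_distinct_conv_sum_set[OF distL] setL)
  qed
  have avg1: "avg_ent E D1 = (\<Sum>i\<in>I. p i * E (proj (\<psi>h i)))"
    by (simp add: avg_ent_def D1_def o_def sum_list_distinct_conv_sum_set[OF distL] setL)
  have le1: "ereal (avg_ent E D1) \<le> ent_assist E (choi \<E>1)"
    unfolding ent_assist_def using pd1 by (intro SUP_upper) auto
  define \<sigma> where "\<sigma> i = loc (\<Phi>s ! i) (proj (\<psi>h i))" for i
  have dens_h: "density (proj (\<psi>h i))" if "i \<in> I" for i
    by (rule density_proj[OF unit_h]) (use that in \<open>simp add: I_def\<close>)
  have dens_s: "density (\<sigma> i)" if "i \<in> I" for i
    unfolding \<sigma>_def by (rule loc_density[OF cptI dens_h[OF that]]) (use that in \<open>simp add: I_def\<close>)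
  have em1: "\<forall>\<rho>. density \<rho> \<longrightarrow> (\<exists>D. pure_decomp \<rho> D \<and> E \<rho> = avg_ent E D) \<and>
        (\<forall>D. pure_decomp \<rho> D \<longrightarrow> E \<rho> \<le> avg_ent E D)"
    and em2: "\<forall>\<rho> (\<Lambda> :: 'n op \<Rightarrow> 'n op). density \<rho> \<and> CPT \<Lambda> \<longrightarrow> E (loc \<Lambda> \<rho>) \<le> E \<rho>"
    using assms(3) unfolding ent_measure_def by (rule conjunct1, rule conjunct2)
  define Dd where "Dd i = (SOME D. pure_decomp (\<sigma> i) D \<and> E (\<sigma> i) = avg_ent E D)" for i
  have Dd: "pure_decomp (\<sigma> i) (Dd i) \<and> E (\<sigma> i) = avg_ent E (Dd i)" if "i \<in> I" for i
  proof -
    have "(\<exists>D. pure_decomp (\<sigma> i) D \<and> E (\<sigma> i) = avg_ent E D)"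
      using conjunct1[OF mp[OF spec[OF em1, of "\<sigma> i"] dens_s[OF that]]] .
    thus ?thesis unfolding Dd_def by (rule someI_ex)
  qed
  have Emono: "E (\<sigma> i) \<le> E (proj (\<psi>h i))" if "i \<in> I" for i
  proof -
    have "density (proj (\<psi>h i)) \<and> CPT (\<Phi>s ! i)" using dens_h[OF that] cptI that by (simp add: I_def)
    thus ?thesis unfolding \<sigma>_def using em2[rule_format, of "proj (\<psi>h i)" "\<Phi>s ! i"] by blast
  qed
  have E2eq: "\<E>2 = (\<lambda>\<rho> x y. \<Sum>i\<in>{..<n}. (\<lambda>\<rho>. (\<Phi>s ! i) (sandwich (Ms ! i) \<rho>)) \<rho> x y)"
  proof (intro ext)
    fix \<rho> x y
    show "\<E>2 \<rho> x y = (\<Sum>i\<in>{..<n}. (\<lambda>\<rho>. (\<Phi>s ! i) (sandwich (Ms ! i) \<rho>)) \<rho> x y)"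
      using e2 by (simp add: n_def)
  qed
  have chi2: "choi \<E>2 = (\<lambda>u v. \<Sum>i\<in>{..<n}. loc (\<Phi>s ! i) (proj (\<psi> i)) u v)"
    unfolding choi_def E2eq loc_sum loc_comp[symmetric] loc_sandwich_proj \<psi>_def ..
  have chi2I: "choi \<E>2 = (\<lambda>u v. \<Sum>i\<in>I. complex_of_real (p i) * \<sigma> i u v)"
  proof (intro ext)
    fix u v
    have "(\<Sum>i\<in>{..<n}. loc (\<Phi>s ! i) (proj (\<psi> i)) u v) = (\<Sum>i\<in>I. complex_of_real (p i) * \<sigma> i u v)"
    proof (rule sum.mono_neutral_cong_right)
      show "finite {..<n}" by simp
      show "I \<subseteq> {..<n}" by (auto simp: I_def)
      show "\<forall>i\<in>{..<n} - I. loc (\<Phi>s ! i) (proj (\<psi> i)) u v = 0"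
      proof
        fix i assume i: "i \<in> {..<n} - I"
        hence "\<not> p i > 0" "i < n" by (auto simp: I_def)
        hence "loc (\<Phi>s ! i) (proj (\<psi> i)) = (\<lambda>u v. 0)"
          by (simp add: psi_zero proj0 loc_zero[OF linI])
        thus "loc (\<Phi>s ! i) (proj (\<psi> i)) u v = 0" by simp
      qed
      fix i assume i: "i \<in> I"
      hence "p i > 0" "i < n" by (auto simp: I_def)
      hence "loc (\<Phi>s ! i) (proj (\<psi> i)) = (\<lambda>u v. complex_of_real (p i) * \<sigma> i u v)"
        unfolding \<sigma>_def by (simp add: proj_scale loc_scale[OF linI])
      thus "loc (\<Phi>s ! i) (proj (\<psi> i)) u v = complex_of_real (p i) * \<sigma> i u v" by simp
    qed
    thus "choi \<E>2 u v = (\<Sum>i\<in>I. complex_of_real (p i) * \<sigma> i u v)" by (simp add: chi2)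
  qed
  have Dsum: "sum_list (map fst (Dd i)) = 1" if "i \<in> I" for i
    using Dd[OF that] unfolding pure_decomp_def by blast
  have DdE: "E (\<sigma> i) = avg_ent E (Dd i)" if "i \<in> I" for i
    using Dd[OF that] by blast
  define D where "D = concat (map (\<lambda>i. map (\<lambda>(q, \<phi>). (p i * q, \<phi>)) (Dd i)) L)"
  have pd2: "pure_decomp (choi \<E>2) D"
    unfolding pure_decomp_def
  proof (intro conjI)
    show "\<forall>(q, \<phi>)\<in>set D. 0 \<le> q \<and> unit_vec \<phi>"
    proof
      fix x assume "x \<in> set D"
      hence "\<exists>i\<in>set L. x \<in> set (map (\<lambda>(q, \<phi>). (p i * q, \<phi>)) (Dd i))"
        by (simp add: D_def)
      then obtain i where iL: "i \<in> set L" and xi0: "x \<in> set (map (\<lambda>(q, \<phi>). (p i * q, \<phi>)) (Dd i))"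
        by blast
      have i: "i \<in> I" using iL setL by simp
      have xi: "x \<in> (\<lambda>(q, \<phi>). (p i * q, \<phi>)) ` set (Dd i)" using xi0 by (simp only: set_map)
      then obtain y where y: "y \<in> set (Dd i)" and xy: "x = (\<lambda>(q, \<phi>). (p i * q, \<phi>)) y" by blast
      have x: "x = (p i * fst y, snd y)" using xy by (cases y) simp
      have "\<forall>(p, \<psi>)\<in>set (Dd i). p \<ge> 0 \<and> unit_vec \<psi>" using Dd[OF i] unfolding pure_decomp_def by blast
      hence cy: "case y of (q, \<phi>) \<Rightarrow> 0 \<le> q \<and> unit_vec \<phi>" using y by (rule bspec)
      have "0 \<le> fst y \<and> unit_vec (snd y)" using cy by (simp add: case_prod_beta)
      thus "case x of (q, \<phi>) \<Rightarrow> 0 \<le> q \<and> unit_vec \<phi>" unfolding x using pnn[of i] by simp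
    qed
    have "sum_list (map fst D) = (\<Sum>i\<in>I. p i * sum_list (map fst (Dd i)))"
      unfolding D_def sum_list_concat_map H1 sum_list_distinct_conv_sum_set[OF distL] setL ..
    also have "\<dots> = (\<Sum>i\<in>I. p i)"
      by (rule sum.cong[OF refl]) (simp add: Dsum)
    finally show "sum_list (map fst D) = 1" using sumP by simp
    show "choi \<E>2 = (\<lambda>x y. \<Sum>(p, \<psi>)\<leftarrow>D. complex_of_real p * proj \<psi> x y)"
    proof (intro ext)
      fix x y
      have "(\<Sum>(p, \<psi>)\<leftarrow>D. complex_of_real p * proj \<psi> x y)
          = (\<Sum>i\<in>I. complex_of_real (p i) * (\<Sum>(p, \<psi>)\<leftarrow>Dd i. complex_of_real p * proj \<psi> x y))"
        unfolding D_def sum_list_concat_map H2 sum_list_distinct_conv_sum_set[OF distL] setL ..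
      also have "\<dots> = (\<Sum>i\<in>I. complex_of_real (p i) * \<sigma> i x y)"
      proof (rule sum.cong[OF refl])
        fix i assume i: "i \<in> I"
        have "\<sigma> i = (\<lambda>x y. \<Sum>(p, \<psi>)\<leftarrow>Dd i. complex_of_real p * proj \<psi> x y)"
          using Dd[OF i] unfolding pure_decomp_def by blast
        thus "complex_of_real (p i) * (\<Sum>(p, \<psi>)\<leftarrow>Dd i. complex_of_real p * proj \<psi> x y)
            = complex_of_real (p i) * \<sigma> i x y" by simp
      qed
      finally show "choi \<E>2 x y = (\<Sum>(p, \<psi>)\<leftarrow>D. complex_of_real p * proj \<psi> x y)"
        by (simp add: chi2I)
    qed
  qed
  have avg2: "avg_ent E D = (\<Sum>i\<in>I. p i * E (\<sigma> i))"
  proof -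
    have "avg_ent E D = (\<Sum>i\<in>I. avg_ent E (map (\<lambda>(q, \<phi>). (p i * q, \<phi>)) (Dd i)))"
      unfolding D_def avg_ent_def sum_list_concat_map sum_list_distinct_conv_sum_set[OF distL] setL ..
    also have "\<dots> = (\<Sum>i\<in>I. p i * E (\<sigma> i))"
      unfolding H3 by (rule sum.cong[OF refl]) (simp add: DdE)
    finally show ?thesis .
  qed
  have dens2: "density (choi \<E>2)"
    unfolding choi_def by (rule loc_density[OF assms(2) density_proj[OF unit_phi_plus[where 'n='n]]])
  have "\<forall>D. pure_decomp (choi \<E>2) D \<longrightarrow> E (choi \<E>2) \<le> avg_ent E D"
    using conjunct2[OF mp[OF spec[OF em1, of "choi \<E>2"] dens2]] .
  hence "E (choi \<E>2) \<le> avg_ent E D" using pd2 by blast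
  also have "\<dots> \<le> avg_ent E D1"
    unfolding avg1 avg2
  proof (rule sum_mono)
    fix i assume i: "i \<in> I"
    show "p i * E (\<sigma> i) \<le> p i * E (proj (\<psi>h i))"
      by (rule mult_left_mono[OF Emono[OF i] pnn])
  qed
  finally have r: "E (choi \<E>2) \<le> avg_ent E D1" .
  hence "ereal (E (choi \<E>2)) \<le> ereal (avg_ent E D1)" by simp
  hence fin: "ereal (E (choi \<E>2)) \<le> ent_assist E (choi \<E>1)" using le1 by (rule order_trans)
  have "\<not> ent_assist E (choi \<E>1) < ereal (E (choi \<E>2))" using leD[OF fin] .
  thus False using assms(4) by contradiction
qed

end
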